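(* There exist subspaces $\mathcal C$ of a bipartite space $\mathcal H=\mathcal H_A\otimes\mathcal H_B$ for which $N_B(\mathcal C)\subsetneq ST_B(\mathcal C)$.
   Context: A mixed state $\rho'$ is "in" $\mathcal C$ if $\mathrm{Tr}(P_{\mathcal C}\rho')=1$, where $P_{\mathcal C}$ is the projector onto $\mathcal C$. $N_B(\mathcal C)=\{\rho:\exists\rho'\text{ in }\mathcal C,\ \exists\mathcal O\text{ a super-operator acting only on }\mathcal H_B,\ \rho=\mathcal O(\rho')\}$. $ST_B(\mathcal C)=\{\rho:\exists\rho'\text{ in }\mathcal C,\ \mathrm{Tr}_B(\rho)=\mathrm{Tr}_B(\rho')\}$. *)

theory Defs
  imports Complex_Main "Jordan_Normal_Form.Matrix"
begin

text \<open>Finite-dimensional bipartite space H = H_A (x) H_B with dim H_A = dA, dim H_B = dB.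
  Operators on H are complex (dA*dB) x (dA*dB) matrices; the basis vector |a>|b>
  (a < dA, b < dB) has index a * dB + b.\<close>

definition mtrace :: "complex mat \<Rightarrow> complex" where
  "mtrace M = (\<Sum>i<dim_row M. M $$ (i, i))"

definition adj :: "complex mat \<Rightarrow> complex mat" where
  "adj M = mat (dim_col M) (dim_row M) (\<lambda>(i, j). cnj (M $$ (j, i)))"

definition psd :: "nat \<Rightarrow> complex mat \<Rightarrow> bool" where
  "psd n M \<longleftrightarrow> M \<in> carrier_mat n n \<and> adj M = M \<and>
     (\<forall>v. dim_vec v = n \<longrightarrow> 0 \<le> Re (conjugate v \<bullet> (M *\<^sub>v v)))"

definition density :: "nat \<Rightarrow> complex mat \<Rightarrow> bool" where
  "density n \<rho> \<longleftrightarrow> psd n \<rho> \<and> mtrace \<rho> = 1"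

text \<open>Orthogonal projectors on an n-dimensional space; a subspace C is represented
  by its projector P_C (every subspace has exactly one such projector).\<close>
definition projector :: "nat \<Rightarrow> complex mat \<Rightarrow> bool" where
  "projector n P \<longleftrightarrow> P \<in> carrier_mat n n \<and> adj P = P \<and> P * P = P"

definition state_in :: "nat \<Rightarrow> complex mat \<Rightarrow> complex mat \<Rightarrow> bool" where
  "state_in n P \<rho> \<longleftrightarrow> density n \<rho> \<and> mtrace (P * \<rho>) = 1"

definition id_tensor :: "nat \<Rightarrow> nat \<Rightarrow> complex mat \<Rightarrow> complex mat" where
  "id_tensor dA dB K = mat (dA * dB) (dA * dB)
     (\<lambda>(i, j). if i div dB = j div dB then K $$ (i mod dB, j mod dB) else 0)"

text \<open>Super-operator (CPTP map) on H_B, given in operator-sum (Kraus) form by a finite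
  list of Kraus operators Ks with sum K^dagger K = I; applied to H as id_A (x) O.\<close>
definition kraus_B :: "nat \<Rightarrow> complex mat list \<Rightarrow> bool" where
  "kraus_B dB Ks \<longleftrightarrow> (\<forall>K\<in>set Ks. K \<in> carrier_mat dB dB) \<and>
     foldr (\<lambda>K S. adj K * K + S) Ks (0\<^sub>m dB dB) = 1\<^sub>m dB"

definition apply_B :: "nat \<Rightarrow> nat \<Rightarrow> complex mat list \<Rightarrow> complex mat \<Rightarrow> complex mat" where
  "apply_B dA dB Ks \<rho> = foldr (\<lambda>K S. id_tensor dA dB K * \<rho> * adj (id_tensor dA dB K) + S) Ks
                         (0\<^sub>m (dA * dB) (dA * dB))"

definition ptrace_B :: "nat \<Rightarrow> nat \<Rightarrow> complex mat \<Rightarrow> complex mat" where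
  "ptrace_B dA dB \<rho> = mat dA dA (\<lambda>(a, a'). \<Sum>b<dB. \<rho> $$ (a * dB + b, a' * dB + b))"

definition N_B :: "nat \<Rightarrow> nat \<Rightarrow> complex mat \<Rightarrow> complex mat set" where
  "N_B dA dB P = {\<rho>. density (dA * dB) \<rho> \<and> (\<exists>\<rho>' Ks. state_in (dA * dB) P \<rho>' \<and> kraus_B dB Ks \<and>
                         \<rho> = apply_B dA dB Ks \<rho>')}"

definition ST_B :: "nat \<Rightarrow> nat \<Rightarrow> complex mat \<Rightarrow> complex mat set" where
  "ST_B dA dB P = {\<rho>. density (dA * dB) \<rho> \<and> (\<exists>\<rho>'. state_in (dA * dB) P \<rho>' \<and>
                         ptrace_B dA dB \<rho> = ptrace_B dA dB \<rho>')}"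

end

theory Submission imports Defs begin



lemma quad_form:
  assumes "M \<in> carrier_mat n n" "dim_vec v = n"
  shows "conjugate v \<bullet> (M *\<^sub>v v) = (\<Sum>i<n. cnj (v $ i) * (\<Sum>j<n. M $$ (i,j) * v $ j))"
  using assms by (auto simp: scalar_prod_def row_def atLeast0LessThan intro!: sum.cong)

lemma psd_herm: "psd n M \<Longrightarrow> i < n \<Longrightarrow> j < n \<Longrightarrow> M $$ (j,i) = cnj (M $$ (i,j))"
proof -
  assume a: "psd n M" "i < n" "j < n"
  then have "adj M = M" unfolding psd_def by blast
  then have "adj M $$ (j,i) = M $$ (j,i)" by simp
  moreover have "M \<in> carrier_mat n n" using a(1) unfolding psd_def by blast
  then have "adj M $$ (j,i) = cnj (M $$ (i,j))" using a(2,3) unfolding adj_def by auto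
  ultimately show ?thesis by simp
qed

lemma psd_two:
  assumes "psd n M" "i < n" "j < n" "i \<noteq> j"
  shows "0 \<le> Re (cnj s * s * M $$ (i,i) + cnj s * M $$ (i,j) + M $$ (j,i) * s + M $$ (j,j))"
proof -
  define v where "v = vec n (\<lambda>k. if k = i then s else if k = j then 1 else 0)"
  have M: "M \<in> carrier_mat n n" using assms unfolding psd_def by auto
  have dv: "dim_vec v = n" unfolding v_def by simp
  have inner: "k < n \<Longrightarrow> (\<Sum>l<n. M $$ (k,l) * v $ l) = M $$ (k,i) * s + M $$ (k,j)" for k
  proof -
    assume "k < n"
    have "(\<Sum>l<n. M $$ (k,l) * v $ l) = (\<Sum>l<n. (if l = i then M $$ (k,i) * s else 0) + (if l = j then M $$ (k,j) else 0))"
      using assms by (auto simp: v_def intro!: sum.cong)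
    also have "\<dots> = M $$ (k,i) * s + M $$ (k,j)" using assms by (simp add: sum.distrib)
    finally show ?thesis .
  qed
  have "conjugate v \<bullet> (M *\<^sub>v v) = (\<Sum>k<n. cnj (v $ k) * (M $$ (k,i) * s + M $$ (k,j)))"
    using quad_form[OF M dv] inner by simp
  also have "\<dots> = (\<Sum>k<n. (if k = i then cnj s * (M $$ (i,i) * s + M $$ (i,j)) else 0) + (if k = j then (M $$ (j,i) * s + M $$ (j,j)) else 0))"
    using assms by (auto simp: v_def intro!: sum.cong)
  also have "\<dots> = cnj s * (M $$ (i,i) * s + M $$ (i,j)) + (M $$ (j,i) * s + M $$ (j,j))"
    using assms by (simp add: sum.distrib)
  finally have "conjugate v \<bullet> (M *\<^sub>v v) = cnj s * s * M $$ (i,i) + cnj s * M $$ (i,j) + M $$ (j,i) * s + M $$ (j,j)"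
    by (simp add: algebra_simps)
  moreover have "0 \<le> Re (conjugate v \<bullet> (M *\<^sub>v v))" using assms dv unfolding psd_def by blast
  ultimately show ?thesis by simp
qed

lemma psd_zero_diag:
  assumes "psd n M" "i < n" "j < n" "M $$ (j,j) = 0"
  shows "M $$ (i,j) = 0"
proof (cases "i = j")
  case True then show ?thesis using assms by simp
next
  case False
  define x where "x = M $$ (i,j)"
  define d where "d = Re (M $$ (i,i))"
  define t :: real where "t = 1 / (\<bar>d\<bar> + 1)"
  have tpos: "t > 0" unfolding t_def by simp
  have td: "t * d < 1" unfolding t_def by (simp add: field_simps) 
  have h: "M $$ (j,i) = cnj x" using psd_herm[OF assms(1,2,3)] x_def by simp
  have "0 \<le> Re (cnj (- of_real t * x) * (- of_real t * x) * M $$ (i,i) + cnj (- of_real t * x) * x + cnj x * (- of_real t * x) + 0)"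
    using psd_two[OF assms(1,2,3) False, of "- of_real t * x"] h assms(4) x_def by simp
  also have "\<dots> = t * t * ((Re x)^2 + (Im x)^2) * d - 2 * t * ((Re x)^2 + (Im x)^2)"
    unfolding d_def by (simp add: algebra_simps power2_eq_square)
  also have "\<dots> = t * t * (cmod x)^2 * d - 2 * t * (cmod x)^2" by (simp add: cmod_power2)
  finally have "0 \<le> t * (cmod x)^2 * (t * d - 2)" by (simp add: algebra_simps)
  then have "(cmod x)^2 * (t * d - 2) \<ge> 0" using tpos by (metis mult.assoc mult_pos_neg not_le)
  then have "(cmod x)^2 \<le> 0" using td by (auto simp: zero_le_mult_iff)
  then show ?thesis unfolding x_def by simp
qed




lemma sum4: "(\<Sum>i<4::nat. f i) = f 0 + f 1 + f 2 + f 3"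
  by (simp add: eval_nat_numeral)
lemma sum4': "(\<Sum>i\<in>{0..<4::nat}. f i) = f 0 + f 1 + f 2 + f 3"
  by (simp add: eval_nat_numeral)
lemma sum2: "(\<Sum>i<2::nat. f i) = f 0 + f 1"
  by (simp add: eval_nat_numeral)
lemma sum2': "(\<Sum>i\<in>{0..<2::nat}. f i) = f 0 + f 1"
  by (simp add: eval_nat_numeral)
lemma less4: "(i::nat) < 4 \<longleftrightarrow> i = 0 \<or> i = 1 \<or> i = 2 \<or> i = 3" by auto
lemma less2: "(i::nat) < 2 \<longleftrightarrow> i = 0 \<or> i = 1" by auto

lemma foldr_entry:
  assumes "\<And>K. K \<in> set Ks \<Longrightarrow> f K \<in> carrier_mat n n" "i < n" "j < n"
  shows "foldr (\<lambda>K S. f K + S) Ks (0\<^sub>m n n) \<in> carrier_mat n n \<and>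
         foldr (\<lambda>K S. f K + S) Ks (0\<^sub>m n n) $$ (i,j) = sum_list (map (\<lambda>K. f K $$ (i,j)) Ks)"
  using assms(1) proof (induction Ks)
  case Nil then show ?case using assms by simp
next
  case (Cons a Ks)
  then have fa: "f a \<in> carrier_mat n n" by simp
  from Cons have IH: "foldr (\<lambda>K S. f K + S) Ks (0\<^sub>m n n) \<in> carrier_mat n n \<and>
         foldr (\<lambda>K S. f K + S) Ks (0\<^sub>m n n) $$ (i,j) = sum_list (map (\<lambda>K. f K $$ (i,j)) Ks)" by simp
  show ?case using fa IH assms(2,3) by auto
qed

definition PC :: "complex mat" where "PC = mat 4 4 (\<lambda>(i,j). if i = j \<and> even i then 1 else 0)"
definition Bell :: "complex mat" where "Bell = mat 4 4 (\<lambda>(i,j). if i \<in> {0,3} \<and> j \<in> {0,3} then 1/2 else 0)"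
definition R0 :: "complex mat" where "R0 = mat 4 4 (\<lambda>(i,j). if i = j \<and> even i then 1/2 else 0)"

lemma PC_proj: "projector (2*2) PC"
  unfolding projector_def
  by (auto simp: PC_def adj_def intro!: eq_matI) (auto simp: sum4' less4 scalar_prod_def)




lemma cnj_sq: "cnj z * z = complex_of_real ((cmod z)^2)"
  by (metis complex_norm_square mult.commute of_real_power)

lemma Bell_dens: "density (2*2) Bell"
proof -
  have C: "Bell \<in> carrier_mat 4 4" by (simp add: Bell_def)
  have "adj Bell = Bell" by (auto simp: Bell_def adj_def intro!: eq_matI)
  moreover have "0 \<le> Re (conjugate v \<bullet> (Bell *\<^sub>v v))" if "dim_vec v = 4" for v
  proof -
    have "conjugate v \<bullet> (Bell *\<^sub>v v) = cnj (v$0 + v$3) * (v$0 + v$3) / 2"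
      unfolding quad_form[OF C that] by (simp add: sum4 Bell_def algebra_simps)
    also have "\<dots> = complex_of_real ((cmod (v$0 + v$3))^2 / 2)"
      unfolding cnj_sq by simp
    finally have e: "conjugate v \<bullet> (Bell *\<^sub>v v) = complex_of_real ((cmod (v$0 + v$3))^2 / 2)" .
    show ?thesis unfolding e Re_complex_of_real by simp
  qed
  moreover have "mtrace Bell = 1" by (simp add: mtrace_def Bell_def sum4)
  ultimately show ?thesis using C by (simp add: density_def psd_def)
qed

lemma R0_state: "state_in (2*2) PC R0"
proof -
  have C: "R0 \<in> carrier_mat 4 4" by (simp add: R0_def)
  have "adj R0 = R0" by (auto simp: R0_def adj_def intro!: eq_matI)
  moreover have "0 \<le> Re (conjugate v \<bullet> (R0 *\<^sub>v v))" if "dim_vec v = 4" for v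
  proof -
    have "conjugate v \<bullet> (R0 *\<^sub>v v) = (cnj (v$0) * v$0 + cnj (v$2) * v$2) / 2"
      unfolding quad_form[OF C that] by (simp add: sum4 R0_def algebra_simps add_divide_distrib)
    also have "\<dots> = complex_of_real (((cmod (v$0))^2 + (cmod (v$2))^2) / 2)"
      unfolding cnj_sq by simp
    finally have e: "conjugate v \<bullet> (R0 *\<^sub>v v) = complex_of_real (((cmod (v$0))^2 + (cmod (v$2))^2) / 2)" .
    show ?thesis unfolding e Re_complex_of_real by simp
  qed
  moreover have "mtrace R0 = 1" by (simp add: mtrace_def R0_def sum4)
  moreover have "mtrace (PC * R0) = 1"
    by (simp add: mtrace_def R0_def PC_def sum4 sum4' scalar_prod_def)
  ultimately show ?thesis using C by (simp add: state_in_def density_def psd_def)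
qed

lemma ptrace_eq: "ptrace_B 2 2 Bell = ptrace_B 2 2 R0"
  by (auto simp: ptrace_B_def Bell_def R0_def sum2 less2 intro!: eq_matI)




lemma psd_diag_re: "psd 4 M \<Longrightarrow> k < 4 \<Longrightarrow> 0 \<le> Re (M $$ (k,k))"
proof -
  assume a: "psd 4 M" "k < 4"
  define i :: nat where "i = (if k = 0 then 1 else 0)"
  have i: "i < 4" "i \<noteq> k" unfolding i_def by auto
  show ?thesis using psd_two[OF a(1) i(1) a(2) i(2), of 0] by simp
qed

lemma psd_diag_im: "psd n M \<Longrightarrow> k < n \<Longrightarrow> Im (M $$ (k,k)) = 0"
  using psd_herm[of n M k k] by (metis cnj.sel(2) complex.expand cnj.sel(1) minus_equation_iff neg_equal_zero)

lemma sigma_struct: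
  assumes "state_in (2*2) PC \<sigma>"
  shows "\<sigma> \<in> carrier_mat 4 4" "\<And>i. i < 4 \<Longrightarrow> \<sigma> $$ (i,1) = 0 \<and> \<sigma> $$ (i,3) = 0 \<and> \<sigma> $$ (1,i) = 0 \<and> \<sigma> $$ (3,i) = 0"
proof -
  have ps: "psd 4 \<sigma>" and tr: "mtrace \<sigma> = 1" and tp: "mtrace (PC * \<sigma>) = 1"
    using assms by (auto simp: state_in_def density_def)
  show C: "\<sigma> \<in> carrier_mat 4 4" using ps by (simp add: psd_def)
  have "mtrace \<sigma> = \<sigma>$$(0,0) + \<sigma>$$(1,1) + \<sigma>$$(2,2) + \<sigma>$$(3,3)" using C by (simp add: mtrace_def sum4)
  moreover have "mtrace (PC * \<sigma>) = \<sigma>$$(0,0) + \<sigma>$$(2,2)" using C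
    by (simp add: mtrace_def PC_def sum4 sum4' scalar_prod_def)
  ultimately have e1: "\<sigma>$$(0,0) + \<sigma>$$(1,1) + \<sigma>$$(2,2) + \<sigma>$$(3,3) = 1"
     and e2: "\<sigma>$$(0,0) + \<sigma>$$(2,2) = 1" using tr tp by auto
  have "\<sigma>$$(1,1) + \<sigma>$$(3,3) = (\<sigma>$$(0,0) + \<sigma>$$(1,1) + \<sigma>$$(2,2) + \<sigma>$$(3,3)) - (\<sigma>$$(0,0) + \<sigma>$$(2,2))"
    by (simp add: algebra_simps)
  then have s: "\<sigma>$$(1,1) + \<sigma>$$(3,3) = 0" unfolding e1 e2 by simp
  have r1: "0 \<le> Re (\<sigma>$$(1,1))" and r3: "0 \<le> Re (\<sigma>$$(3,3))" using psd_diag_re[OF ps] by auto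
  have i1: "Im (\<sigma>$$(1,1)) = 0" and i3: "Im (\<sigma>$$(3,3)) = 0" using psd_diag_im[OF ps] by auto
  have "Re (\<sigma>$$(1,1)) + Re (\<sigma>$$(3,3)) = 0" using arg_cong[OF s, of Re] by simp
  then have "Re (\<sigma>$$(1,1)) = 0" "Re (\<sigma>$$(3,3)) = 0" using r1 r3 by auto
  then have z1: "\<sigma>$$(1,1) = 0" and z3: "\<sigma>$$(3,3) = 0" using i1 i3 by (auto simp: complex_eq_iff)
  fix i assume i: "i < (4::nat)"
  have a: "\<sigma> $$ (i,1) = 0" using psd_zero_diag[OF ps i _ z1] by simp
  have b: "\<sigma> $$ (i,3) = 0" using psd_zero_diag[OF ps i _ z3] by simp
  have c: "\<sigma> $$ (1,i) = 0" using psd_herm[OF ps i, of 1] a by simp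
  have d: "\<sigma> $$ (3,i) = 0" using psd_herm[OF ps i, of 3] b by simp
  show "\<sigma> $$ (i,1) = 0 \<and> \<sigma> $$ (i,3) = 0 \<and> \<sigma> $$ (1,i) = 0 \<and> \<sigma> $$ (3,i) = 0" using a b c d by simp
qed

lemma TK_entry:
  assumes C: "\<sigma> \<in> carrier_mat 4 4"
    and z: "\<And>i. i < 4 \<Longrightarrow> \<sigma> $$ (i,1) = 0 \<and> \<sigma> $$ (i,3) = 0 \<and> \<sigma> $$ (1,i) = 0 \<and> \<sigma> $$ (3,i) = 0"
    and ij: "i < 4" "j < 4"
  shows "(id_tensor 2 2 K * \<sigma> * adj (id_tensor 2 2 K)) $$ (i,j) =
         K$$(i mod 2, 0) * \<sigma>$$(2*(i div 2), 2*(j div 2)) * cnj (K$$(j mod 2, 0))"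
proof -
  have z': "\<sigma> $$ (0,1) = 0" "\<sigma> $$ (0,3) = 0" "\<sigma> $$ (1,0) = 0" "\<sigma> $$ (3,0) = 0"
     "\<sigma> $$ (2,1) = 0" "\<sigma> $$ (2,3) = 0" "\<sigma> $$ (1,2) = 0" "\<sigma> $$ (3,2) = 0"
     "\<sigma> $$ (1,1) = 0" "\<sigma> $$ (1,3) = 0" "\<sigma> $$ (3,1) = 0" "\<sigma> $$ (3,3) = 0"
    using z[of 0] z[of 1] z[of 2] z[of 3] by auto
  note z'' = z'[unfolded One_nat_def]
  show ?thesis using ij C
    by (auto simp: less4 id_tensor_def adj_def sum4' scalar_prod_def z' z'')
qed




lemma out_entry:
  assumes st: "state_in (2*2) PC \<sigma>" and ij: "i < 4" "j < 4"
  shows "apply_B 2 2 Ks \<sigma> $$ (i,j) = \<sigma>$$(2*(i div 2), 2*(j div 2)) *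
           sum_list (map (\<lambda>K. K$$(i mod 2, 0) * cnj (K$$(j mod 2, 0))) Ks)"
proof -
  note ss = sigma_struct[OF st]
  have car: "id_tensor 2 2 K * \<sigma> * adj (id_tensor 2 2 K) \<in> carrier_mat (2*2) (2*2)" for K
    using ss(1) by (auto simp: id_tensor_def adj_def)
  have "apply_B 2 2 Ks \<sigma> $$ (i,j) = sum_list (map (\<lambda>K. (id_tensor 2 2 K * \<sigma> * adj (id_tensor 2 2 K)) $$ (i,j)) Ks)"
    unfolding apply_B_def using foldr_entry[of Ks "\<lambda>K. id_tensor 2 2 K * \<sigma> * adj (id_tensor 2 2 K)" "2*2" i j] car ij by simp
  also have "\<dots> = sum_list (map (\<lambda>K. \<sigma>$$(2*(i div 2), 2*(j div 2)) * (K$$(i mod 2, 0) * cnj (K$$(j mod 2, 0)))) Ks)"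
    using TK_entry[OF ss ij] by (simp add: algebra_simps)
  also have "\<dots> = \<sigma>$$(2*(i div 2), 2*(j div 2)) * sum_list (map (\<lambda>K. K$$(i mod 2, 0) * cnj (K$$(j mod 2, 0))) Ks)"
    by (simp add: sum_list_const_mult)
  finally show ?thesis .
qed

lemma kraus_sum:
  assumes "kraus_B 2 Ks"
  shows "sum_list (map (\<lambda>K. K$$(0, 0) * cnj (K$$(0, 0))) Ks) + sum_list (map (\<lambda>K. K$$(1, 0) * cnj (K$$(1, 0))) Ks) = 1"
proof -
  have car: "\<And>K. K \<in> set Ks \<Longrightarrow> K \<in> carrier_mat 2 2" and eq: "foldr (\<lambda>K S. adj K * K + S) Ks (0\<^sub>m 2 2) = 1\<^sub>m 2"
    using assms by (auto simp: kraus_B_def)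
  have c2: "\<And>K. K \<in> set Ks \<Longrightarrow> adj K * K \<in> carrier_mat 2 2" using car by (fastforce simp: adj_def)
  have "1 = foldr (\<lambda>K S. adj K * K + S) Ks (0\<^sub>m 2 2) $$ (0,0)" using eq by simp
  also have "\<dots> = sum_list (map (\<lambda>K. (adj K * K) $$ (0,0)) Ks)"
    using foldr_entry[of Ks "\<lambda>K. adj K * K" 2 0 0] c2 by simp
  also have "\<dots> = sum_list (map (\<lambda>K. K$$(0, 0) * cnj (K$$(0, 0)) + K$$(1, 0) * cnj (K$$(1, 0))) Ks)"
  proof (intro arg_cong[where f = sum_list] map_cong refl)
    fix K assume "K \<in> set Ks"
    then have "K \<in> carrier_mat 2 2" using car by blast
    then show "(adj K * K) $$ (0,0) = K$$(0, 0) * cnj (K$$(0, 0)) + K$$(1, 0) * cnj (K$$(1, 0))"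
      by (auto simp: adj_def sum2' scalar_prod_def mult.commute)
  qed
  also have "\<dots> = sum_list (map (\<lambda>K. K$$(0, 0) * cnj (K$$(0, 0))) Ks) + sum_list (map (\<lambda>K. K$$(1, 0) * cnj (K$$(1, 0))) Ks)"
    by (simp add: sum_list_addf)
  finally show ?thesis by simp
qed




lemma Bell_notin: "Bell \<notin> N_B 2 2 PC"
proof
  assume "Bell \<in> N_B 2 2 PC"
  then obtain \<sigma> Ks where st: "state_in (2*2) PC \<sigma>" and kr: "kraus_B 2 Ks" and eq: "Bell = apply_B 2 2 Ks \<sigma>"
    unfolding N_B_def by auto
  define S1 where "S1 = sum_list (map (\<lambda>K. K$$(1, 0) * cnj (K$$(1, 0))) Ks)"
  define S0 where "S0 = sum_list (map (\<lambda>K. K$$(0, 0) * cnj (K$$(0, 0))) Ks)"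
  have "Bell $$ (0,0) = \<sigma>$$(0,0) * S0" unfolding eq S0_def using out_entry[OF st, of 0 0 Ks] by simp
  then have a: "\<sigma>$$(0,0) * S0 = 1/2" by (simp add: Bell_def)
  have "Bell $$ (1,1) = \<sigma>$$(0,0) * S1" unfolding eq S1_def using out_entry[OF st, of 1 1 Ks] by simp
  then have b: "\<sigma>$$(0,0) * S1 = 0" by (simp add: Bell_def)
  have "Bell $$ (3,3) = \<sigma>$$(2,2) * S1" unfolding eq S1_def using out_entry[OF st, of 3 3 Ks] by simp
  then have c: "\<sigma>$$(2,2) * S1 = 1/2" by (simp add: Bell_def)
  have "\<sigma>$$(0,0) \<noteq> 0" using a by auto
  then have "S1 = 0" using b by simp
  then show False using c by simp
qed

lemma N_sub_ST: "N_B 2 2 PC \<subseteq> ST_B 2 2 PC"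
proof
  fix \<rho> assume "\<rho> \<in> N_B 2 2 PC"
  then obtain \<sigma> Ks where d: "density (2*2) \<rho>" and st: "state_in (2*2) PC \<sigma>" and kr: "kraus_B 2 Ks" and eq: "\<rho> = apply_B 2 2 Ks \<sigma>"
    unfolding N_B_def by auto
  note ss = sigma_struct[OF st]
  define S1 where "S1 = sum_list (map (\<lambda>K. K$$(1, 0) * cnj (K$$(1, 0))) Ks)"
  define S0 where "S0 = sum_list (map (\<lambda>K. K$$(0, 0) * cnj (K$$(0, 0))) Ks)"
  have k: "S0 + S1 = 1" using kraus_sum[OF kr] unfolding S0_def S1_def .
  have "ptrace_B 2 2 \<rho> = ptrace_B 2 2 \<sigma>"
  proof (rule eq_matI)
    fix a a' assume "a < dim_row (ptrace_B 2 2 \<sigma>)" "a' < dim_col (ptrace_B 2 2 \<sigma>)"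
    then have aa: "a < 2" "a' < 2" by (auto simp: ptrace_B_def)
    have o0: "\<rho> $$ (a*2, a'*2) = \<sigma>$$(2*a, 2*a') * S0"
      unfolding eq S0_def using out_entry[OF st, of "a*2" "a'*2" Ks] aa by simp
    have o1: "\<rho> $$ (a*2+1, a'*2+1) = \<sigma>$$(2*a, 2*a') * S1"
    proof -
      have m: "(a*2+1) mod 2 = 1" "(a'*2+1) mod 2 = 1" "(a*2+1) div 2 = a" "(a'*2+1) div 2 = a'" by presburger+
      have "a*2+1 < 4" "a'*2+1 < 4" using aa by auto
      from out_entry[OF st this, of Ks] show ?thesis unfolding eq S1_def m by simp
    qed
    have z: "\<sigma> $$ (a*2+1, a'*2+1) = 0" using ss(2)[of "a*2+1"] aa by (auto simp: less2)
    have "ptrace_B 2 2 \<rho> $$ (a,a') = \<rho> $$ (a*2, a'*2) + \<rho> $$ (a*2+1, a'*2+1)"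
      using aa by (simp add: ptrace_B_def sum2)
    also have "\<dots> = \<sigma>$$(2*a, 2*a') * (S0 + S1)" unfolding o0 o1 by (simp add: algebra_simps)
    also have "\<dots> = \<sigma> $$ (a*2, a'*2) + \<sigma> $$ (a*2+1, a'*2+1)" using k z by (simp add: mult.commute)
    also have "\<dots> = ptrace_B 2 2 \<sigma> $$ (a,a')" using aa by (simp add: ptrace_B_def sum2)
    finally show "ptrace_B 2 2 \<rho> $$ (a,a') = ptrace_B 2 2 \<sigma> $$ (a,a')" .
  qed (auto simp: ptrace_B_def)
  then show "\<rho> \<in> ST_B 2 2 PC" using d st unfolding ST_B_def by auto
qed

theorem mainTheorem9:
  shows "\<exists>(dA::nat) (dB::nat) P. projector (dA * dB) P \<and> N_B dA dB P \<subset> ST_B dA dB P"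
proof (intro exI conjI)
  show "projector (2*2) PC" by (rule PC_proj)
  have "Bell \<in> ST_B 2 2 PC" unfolding ST_B_def using Bell_dens R0_state ptrace_eq by auto
  then show "N_B 2 2 PC \<subset> ST_B 2 2 PC" using N_sub_ST Bell_notin by blast
qed


end
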